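(* Let $(Z, S(1), S(0), Y(1), Y(0), \mathbf{X})$ be random variables with $Z\in\{0,1\}$, $S(z)\in\{0,1\}$, $Y(z)$ real-valued, $\mathbf{X}$ a covariate vector, observed $S=S(Z)$, and assume Randomization: $Z \perp\!\!\!\perp \{S(1),S(0),Y(1),Y(0),\mathbf{X}\}$. Assume Monotonicity ($S(1)\ge S(0)$ a.s.) and General Principal Ignorability ($Y(z)\perp\!\!\!\perp U\mid \mathbf{X}$ for $z=0,1$). Then $Y(1)\perp\!\!\!\perp U\mid\{Z=1,S=1,e_{1,u}(\mathbf{X})\}$ for $u=s\bar{s}$ and $u=ss$, and $Y(0)\perp\!\!\!\perp U\mid\{Z=0,S=0,e_{0,u}(\mathbf{X})\}$ for $u=s\bar{s}$ and $u=\bar{s}\bar{s}$.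
   Context: The principal stratum is $U=(S(1),S(0))$, whose values $(1,1),(1,0),(0,1),(0,0)$ are labelled $ss, s\bar{s}, \bar{s}s, \bar{s}\bar{s}$. Principal scores: $e_u(\mathbf{X}) = \Pr(U=u\mid \mathbf{X})$. Define $e_{1,s\bar{s}}(\mathbf{X}) = e_{s\bar{s}}(\mathbf{X})/\{e_{s\bar{s}}(\mathbf{X})+e_{ss}(\mathbf{X})\}$, $e_{1,ss}(\mathbf{X}) = e_{ss}(\mathbf{X})/\{e_{s\bar{s}}(\mathbf{X})+e_{ss}(\mathbf{X})\}$, $e_{0,s\bar{s}}(\mathbf{X}) = e_{s\bar{s}}(\mathbf{X})/\{e_{s\bar{s}}(\mathbf{X})+e_{\bar{s}\bar{s}}(\mathbf{X})\}$, $e_{0,\bar{s}\bar{s}}(\mathbf{X}) = e_{\bar{s}\bar{s}}(\mathbf{X})/\{e_{s\bar{s}}(\mathbf{X})+e_{\bar{s}\bar{s}}(\mathbf{X})\}$. Conditioning events and denominators are assumed positive. *)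

theory Defs
  imports "HOL-Probability.Probability"
begin

definition cond_prob_given ::
  "'a measure \<Rightarrow> ('a \<Rightarrow> 'c) \<Rightarrow> 'c measure \<Rightarrow> 'a set \<Rightarrow> 'a \<Rightarrow> real" where
  "cond_prob_given M W MW E =
     real_cond_exp M (vimage_algebra (space M) W MW) (indicator (E \<inter> space M))"

definition cond_indep ::
  "'a measure \<Rightarrow> ('a \<Rightarrow> 'b) \<Rightarrow> 'b measure \<Rightarrow> ('a \<Rightarrow> 'd) \<Rightarrow> 'd measure
     \<Rightarrow> ('a \<Rightarrow> 'c) \<Rightarrow> 'c measure \<Rightarrow> bool" where
  "cond_indep M A MA B MB W MW \<longleftrightarrow>
     (\<forall>a\<in>sets MA. \<forall>b\<in>sets MB. AE \<omega> in M.
        cond_prob_given M W MW (A -` a \<inter> B -` b) \<omega> =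
        cond_prob_given M W MW (A -` a) \<omega> * cond_prob_given M W MW (B -` b) \<omega>)"

text \<open>e is a version of the conditional probability x \<mapsto> Pr(E | X = x).\<close>
definition is_cond_prob_fun ::
  "'a measure \<Rightarrow> ('a \<Rightarrow> 'x) \<Rightarrow> 'x measure \<Rightarrow> 'a set \<Rightarrow> ('x \<Rightarrow> real) \<Rightarrow> bool" where
  "is_cond_prob_fun M X MX E e \<longleftrightarrow>
     e \<in> borel_measurable MX \<and> (AE \<omega> in M. e (X \<omega>) = cond_prob_given M X MX E \<omega>)"

text \<open>Independence of two random variables with possibly different codomains
  (the library's indep_var requires equal codomain types); this is indep_vars_def2
  specialised to two variables.\<close>
definition indep_rv ::
  "'a measure \<Rightarrow> ('a \<Rightarrow> 'b) \<Rightarrow> 'b measure \<Rightarrow> ('a \<Rightarrow> 'c) \<Rightarrow> 'c measure \<Rightarrow> bool" where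
  "indep_rv M A MA B MB \<longleftrightarrow>
     A \<in> measurable M MA \<and> B \<in> measurable M MB \<and>
     prob_space.indep_set M {A -` a \<inter> space M | a. a \<in> sets MA}
                            {B -` b \<inter> space M | b. b \<in> sets MB}"

end

theory Submission
  imports Defs
begin


lemma fm_sub:
  assumes "prob_space N" "T \<in> measurable N MT"
  shows "finite_measure_subalgebra N (vimage_algebra (space N) T MT)"
proof -
  interpret prob_space N by fact
  have "subalgebra N (vimage_algebra (space N) T MT)"
    unfolding subalgebra_def using sets_image_in_sets[OF refl assms(2)] by simp
  then show ?thesis
    by (intro finite_measure_subalgebra.intro finite_measure_subalgebra_axioms.intro finite_measure_axioms)
qed
lemma ci_from_identity:
  fixes N :: "'a measure" and T :: "'a \<Rightarrow> real" and Y :: "'a \<Rightarrow> real"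
    and U :: "'a \<Rightarrow> 'u" and H :: "'u set \<Rightarrow> 'a \<Rightarrow> real"
  assumes P: "prob_space N" and [measurable]: "T \<in> borel_measurable N" "Y \<in> borel_measurable N"
    "U \<in> measurable N (count_space UNIV)"
    and Hm: "\<And>b. H b \<in> borel_measurable (vimage_algebra (space N) T borel)"
    and Hb: "\<And>b. AE \<omega> in N. \<bar>H b \<omega>\<bar> \<le> 1"
    and ident: "\<And>a b c. a \<in> sets borel \<Longrightarrow> c \<in> sets borel \<Longrightarrow>
      (\<integral>\<omega>. indicator (Y -` a \<inter> U -` b \<inter> space N) \<omega> * indicator (T -` c \<inter> space N) \<omega> \<partial>N)
      = (\<integral>\<omega>. indicator (Y -` a \<inter> space N) \<omega> * H b \<omega> * indicator (T -` c \<inter> space N) \<omega> \<partial>N)"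
  shows "cond_indep N Y borel U (count_space UNIV) T borel"
proof -
  interpret prob_space N by fact
  define G where "G = vimage_algebra (space N) T borel"
  interpret S: finite_measure_subalgebra N G
    unfolding G_def by (rule fm_sub) (use P in auto)
  have Gsets: "\<exists>c\<in>sets borel. A = T -` c \<inter> space N" if "A \<in> sets G" for A
  proof -
    have "sets G = {T -` A \<inter> space N | A. A \<in> sets borel}"
      unfolding G_def by (rule sets_vimage_algebra2) auto
    with that show ?thesis by auto
  qed
  have intI: "integrable N (indicator A :: 'a \<Rightarrow> real)" if "A \<in> sets N" for A
    using that by (simp add: integrable_real_indicator emeasure_finite less_top[symmetric])
  have HmG[measurable]: "H b \<in> borel_measurable G" for b using Hm unfolding G_def .
  have HmN[measurable]: "H b \<in> borel_measurable N" for b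
    using measurable_from_subalg[OF S.subalg HmG] .
  have Hint: "integrable N (H b)" for b
  proof (rule integrable_const_bound[where B=1])
    show "AE x in N. norm (H b x) \<le> 1" using Hb[of b] by simp
  qed (rule HmN)
  show ?thesis
    unfolding cond_indep_def cond_prob_given_def
  proof (intro ballI)
    fix a b assume a[measurable]: "a \<in> sets (borel :: real measure)" and b: "b \<in> sets (count_space (UNIV :: 'u set))"
    define CA where "CA = real_cond_exp N G (indicator (Y -` a \<inter> space N))"
    have [measurable]: "Y -` a \<inter> space N \<in> sets N" by measurable
    have [measurable]: "U -` b \<inter> space N \<in> sets N" by measurable
    have [measurable]: "Y -` a \<inter> U -` b \<inter> space N \<in> sets N"
    proof -
      have "Y -` a \<inter> U -` b \<inter> space N = (Y -` a \<inter> space N) \<inter> (U -` b \<inter> space N)" by auto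
      then show ?thesis by (metis \<open>Y -` a \<inter> space N \<in> events\<close> \<open>U -` b \<inter> space N \<in> events\<close> sets.Int)
    qed
    have CAm[measurable]: "CA \<in> borel_measurable G" unfolding CA_def by (rule borel_measurable_cond_exp)
    have CAmN[measurable]: "CA \<in> borel_measurable N" unfolding CA_def by (rule borel_measurable_cond_exp2)
    have CAb: "AE \<omega> in N. \<bar>CA \<omega>\<bar> \<le> 1"
    proof -
      have "AE \<omega> in N. CA \<omega> \<ge> 0" unfolding CA_def
        by (rule S.real_cond_exp_ge_c) (rule intI, simp, simp)
      moreover have "AE \<omega> in N. CA \<omega> \<le> 1" unfolding CA_def
        by (rule S.real_cond_exp_le_c) (rule intI, simp, simp split: split_indicator)
      ultimately show ?thesis by auto
    qed
    have c1: "AE \<omega> in N. real_cond_exp N G (indicator (U -` b \<inter> space N)) \<omega> = H b \<omega>"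
    proof (rule S.real_cond_exp_charact)
      fix A assume "A \<in> sets G"
      then obtain c where c[measurable]: "c \<in> sets borel" and A: "A = T -` c \<inter> space N"
        using Gsets by blast
      have "(\<integral>x\<in>A. (indicator (U -` b \<inter> space N) x :: real) \<partial>N)
          = (\<integral>\<omega>. indicator (Y -` UNIV \<inter> U -` b \<inter> space N) \<omega> * indicator (T -` c \<inter> space N) \<omega> \<partial>N)"
        unfolding A set_lebesgue_integral_def by (auto intro!: Bochner_Integration.integral_cong split: split_indicator)
      also have "\<dots> = (\<integral>\<omega>. indicator (Y -` UNIV \<inter> space N) \<omega> * H b \<omega> * indicator (T -` c \<inter> space N) \<omega> \<partial>N)"
        by (rule ident) auto
      also have "\<dots> = (\<integral>x\<in>A. H b x \<partial>N)"
        unfolding A set_lebesgue_integral_def by (auto intro!: Bochner_Integration.integral_cong split: split_indicator)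
      finally show "(\<integral>x\<in>A. indicator (U -` b \<inter> space N) x \<partial>N) = (\<integral>x\<in>A. H b x \<partial>N)" .
    next
      show "integrable N (indicator (U -` b \<inter> space N) :: 'a \<Rightarrow> real)" by (rule intI) simp
      show "integrable N (H b)" by (rule Hint)
      show "H b \<in> borel_measurable G" by (rule HmG)
    qed
    have c2: "AE \<omega> in N. real_cond_exp N G (indicator (Y -` a \<inter> U -` b \<inter> space N)) \<omega> = H b \<omega> * CA \<omega>"
    proof (rule S.real_cond_exp_charact)
      fix A assume "A \<in> sets G"
      then obtain c where c[measurable]: "c \<in> sets borel" and A: "A = T -` c \<inter> space N"
        using Gsets by blast
      have [measurable]: "A \<in> sets G" using \<open>A \<in> sets G\<close> .
      have fG[measurable]: "(\<lambda>\<omega>. H b \<omega> * indicator A \<omega>) \<in> borel_measurable G" by measurable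
      have "(\<integral>x\<in>A. (indicator (Y -` a \<inter> U -` b \<inter> space N) x :: real) \<partial>N)
          = (\<integral>\<omega>. indicator (Y -` a \<inter> U -` b \<inter> space N) \<omega> * indicator (T -` c \<inter> space N) \<omega> \<partial>N)"
        unfolding A set_lebesgue_integral_def by (auto intro!: Bochner_Integration.integral_cong split: split_indicator)
      also have "\<dots> = (\<integral>\<omega>. indicator (Y -` a \<inter> space N) \<omega> * H b \<omega> * indicator (T -` c \<inter> space N) \<omega> \<partial>N)"
        by (rule ident) auto
      also have "\<dots> = (\<integral>\<omega>. (H b \<omega> * indicator A \<omega>) * indicator (Y -` a \<inter> space N) \<omega> \<partial>N)"
        unfolding A set_lebesgue_integral_def by (auto intro!: Bochner_Integration.integral_cong split: split_indicator)
      also have "\<dots> = (\<integral>\<omega>. (H b \<omega> * indicator A \<omega>) * CA \<omega> \<partial>N)"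
        unfolding CA_def
      proof (rule S.real_cond_exp_intg(2)[symmetric])
        show "integrable N (\<lambda>x. H b x * indicator A x * indicator (Y -` a \<inter> space N) x)"
        proof (rule integrable_const_bound[where B=1])
          show "AE x in N. norm (H b x * indicator A x * indicator (Y -` a \<inter> space N) x) \<le> (1::real)"
            using Hb[of b] by (auto split: split_indicator)
          have [measurable]: "A \<in> sets N" unfolding A by measurable
          show "(\<lambda>x. H b x * indicator A x * indicator (Y -` a \<inter> space N) x) \<in> borel_measurable N"
            by measurable
        qed
      next
        show "(\<lambda>\<omega>. H b \<omega> * indicator A \<omega>) \<in> borel_measurable G" by (rule fG)
        show "(indicator (Y -` a \<inter> space N) :: 'a \<Rightarrow> real) \<in> borel_measurable N" by simp
      qed
      also have "\<dots> = (\<integral>x\<in>A. H b x * CA x \<partial>N)"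
        unfolding set_lebesgue_integral_def by (auto intro!: Bochner_Integration.integral_cong split: split_indicator)
      finally show "(\<integral>x\<in>A. indicator (Y -` a \<inter> U -` b \<inter> space N) x \<partial>N) = (\<integral>x\<in>A. H b x * CA x \<partial>N)" .
    next
      show "integrable N (\<lambda>x. H b x * CA x)"
      proof (rule integrable_const_bound[where B=1])
        show "AE x in N. norm (H b x * CA x) \<le> (1::real)"
          using Hb[of b] CAb
        proof eventually_elim
          case (elim x)
          then show ?case by (simp add: abs_mult mult_le_one)
        qed
        show "(\<lambda>x. H b x * CA x) \<in> borel_measurable N" using HmN CAmN by (rule borel_measurable_times)
      qed
    next
      show "integrable N (indicator (Y -` a \<inter> U -` b \<inter> space N) :: 'a \<Rightarrow> real)" by (rule intI) simp
      show "(\<lambda>x. H b x * CA x) \<in> borel_measurable G" using HmG CAm by (rule borel_measurable_times)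
    qed
    have "AE \<omega> in N. real_cond_exp N G (indicator (Y -` a \<inter> U -` b \<inter> space N)) \<omega> =
       real_cond_exp N G (indicator (Y -` a \<inter> space N)) \<omega> * real_cond_exp N G (indicator (U -` b \<inter> space N)) \<omega>"
      using c1 c2 unfolding CA_def by auto
    then show "AE \<omega> in N. real_cond_exp N (vimage_algebra (space N) T borel) (indicator (Y -` a \<inter> U -` b \<inter> space N)) \<omega> =
       real_cond_exp N (vimage_algebra (space N) T borel) (indicator (Y -` a \<inter> space N)) \<omega> * real_cond_exp N (vimage_algebra (space N) T borel) (indicator (U -` b \<inter> space N)) \<omega>"
      unfolding G_def .
  qed
qed



lemma integral_uniform:
  fixes f :: "'a \<Rightarrow> real"
  assumes P: "prob_space M" and A[measurable]: "A \<in> sets M" and pos: "measure M A > 0"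
    and f[measurable]: "f \<in> borel_measurable M"
  shows "integral\<^sup>L (uniform_measure M A) f = (\<integral>x. indicator A x * f x \<partial>M) / measure M A"
proof -
  interpret prob_space M by fact
  have em: "emeasure M A = ennreal (measure M A)"
    by (rule emeasure_eq_ennreal_measure) (simp add: emeasure_finite)
  have "uniform_measure M A = density M (\<lambda>x. ennreal (indicator A x / measure M A))"
    unfolding uniform_measure_def
  proof (rule density_cong)
    show "AE x in M. indicator A x / emeasure M A = ennreal (indicator A x / measure M A)"
    proof -
      have d: "1 / ennreal (measure M A) = ennreal (1 / measure M A)"
        using divide_ennreal[of 1 "measure M A"] pos by simp
      show ?thesis using pos by (auto simp: em d split: split_indicator)
    qed
  qed simp_all
  then have "integral\<^sup>L (uniform_measure M A) f = (\<integral>x. (indicator A x / measure M A) *\<^sub>R f x \<partial>M)"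
    by (simp add: integral_density)
  also have "\<dots> = (\<integral>x. (indicator A x * f x) / measure M A \<partial>M)"
    by (rule Bochner_Integration.integral_cong) auto
  also have "\<dots> = (\<integral>x. indicator A x * f x \<partial>M) / measure M A"
    by (rule integral_divide_zero)
  finally show ?thesis .
qed

lemma remove_Z:
  fixes M :: "'a measure" and X :: "'a \<Rightarrow> 'x" and \<psi> :: "'x \<Rightarrow> real"
  assumes P: "prob_space M" and X[measurable]: "X \<in> measurable M MX"
    and Zs[measurable]: "Zs \<in> sets M" and F[measurable]: "F \<in> sets M"
    and indep: "\<And>g. g \<in> sets MX \<Longrightarrow>
       measure M (Zs \<inter> (F \<inter> X -` g \<inter> space M)) = measure M Zs * measure M (F \<inter> X -` g \<inter> space M)"
    and psi[measurable]: "\<psi> \<in> borel_measurable MX" and bnd: "AE \<omega> in M. \<bar>\<psi> (X \<omega>)\<bar> \<le> 1"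
  shows "(\<integral>\<omega>. indicator Zs \<omega> * indicator F \<omega> * \<psi> (X \<omega>) \<partial>M)
       = measure M Zs * (\<integral>\<omega>. indicator F \<omega> * \<psi> (X \<omega>) \<partial>M)"
proof -
  interpret prob_space M by fact
  define G where "G = vimage_algebra (space M) X MX"
  interpret S: finite_measure_subalgebra M G
    unfolding G_def by (rule fm_sub) (use P in auto)
  have Gsets: "\<exists>g\<in>sets MX. A = X -` g \<inter> space M" if "A \<in> sets G" for A
  proof -
    have "sets G = {X -` A \<inter> space M | A. A \<in> sets MX}"
      unfolding G_def by (rule sets_vimage_algebra2) (use X in \<open>auto simp: measurable_def\<close>)
    with that show ?thesis by auto
  qed
  have intI: "integrable M (indicator A :: 'a \<Rightarrow> real)" if "A \<in> sets M" for A
    using that by (simp add: integrable_real_indicator emeasure_finite less_top[symmetric])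
  have XG: "X \<in> measurable G MX"
    unfolding G_def by (rule measurable_vimage_algebra1) (use X in \<open>auto simp: measurable_def\<close>)
  have psiG: "(\<lambda>\<omega>. \<psi> (X \<omega>)) \<in> borel_measurable G"
    using measurable_comp[OF XG psi] by (simp add: comp_def)
  define cF where "cF = real_cond_exp M G (indicator F)"
  have cFG: "cF \<in> borel_measurable G" unfolding cF_def by (rule borel_measurable_cond_exp)
  have cFM[measurable]: "cF \<in> borel_measurable M" unfolding cF_def by (rule borel_measurable_cond_exp2)
  have ZF[measurable]: "Zs \<inter> F \<in> sets M" by simp
  have ce: "AE \<omega> in M. real_cond_exp M G (indicator (Zs \<inter> F)) \<omega> = prob Zs * cF \<omega>"
  proof (rule S.real_cond_exp_charact)
    fix A assume "A \<in> sets G"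
    then obtain g where g[measurable]: "g \<in> sets MX" and A: "A = X -` g \<inter> space M" using Gsets by blast
    have AM[measurable]: "A \<in> sets M" unfolding A by measurable
    have "(\<integral>x\<in>A. (indicator (Zs \<inter> F) x :: real) \<partial>M) = measure M (Zs \<inter> (F \<inter> X -` g \<inter> space M))"
      unfolding set_lebesgue_integral_def
    proof -
      have "(\<integral>x. indicator A x *\<^sub>R (indicator (Zs \<inter> F) x :: real) \<partial>M) = (\<integral>x. indicator (Zs \<inter> (F \<inter> X -` g \<inter> space M)) x \<partial>M)"
        unfolding A by (rule Bochner_Integration.integral_cong) (auto split: split_indicator)
      also have "\<dots> = measure M (Zs \<inter> (F \<inter> X -` g \<inter> space M))"
        using sets.sets_into_space[OF Zs] by (simp add: Int_absorb2 Int_assoc[symmetric] Int_commute inf_left_commute)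
      finally show "(\<integral>x. indicator A x *\<^sub>R (indicator (Zs \<inter> F) x :: real) \<partial>M) = measure M (Zs \<inter> (F \<inter> X -` g \<inter> space M))" .
    qed
    also have "\<dots> = prob Zs * measure M (F \<inter> X -` g \<inter> space M)" by (rule indep[OF g])
    also have "measure M (F \<inter> X -` g \<inter> space M) = (\<integral>x\<in>A. (indicator F x :: real) \<partial>M)"
    proof -
      have "(\<integral>x\<in>A. (indicator F x :: real) \<partial>M) = (\<integral>x. indicator (F \<inter> X -` g \<inter> space M) x \<partial>M)"
        unfolding set_lebesgue_integral_def A by (rule Bochner_Integration.integral_cong) (auto split: split_indicator)
      also have "\<dots> = measure M (F \<inter> X -` g \<inter> space M)" by (simp add: Int_absorb2 Int_assoc)
      finally show ?thesis by simp
    qed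
    also have "(\<integral>x\<in>A. (indicator F x :: real) \<partial>M) = (\<integral>x\<in>A. cF x \<partial>M)"
      unfolding cF_def using \<open>A \<in> sets G\<close> by (intro S.real_cond_exp_intA intI F)
    also have "prob Zs * (\<integral>x\<in>A. cF x \<partial>M) = (\<integral>x\<in>A. prob Zs * cF x \<partial>M)"
    proof -
      have "(\<integral>x\<in>A. prob Zs * cF x \<partial>M) = (\<integral>x. prob Zs * (indicator A x * cF x) \<partial>M)"
        unfolding set_lebesgue_integral_def by (rule Bochner_Integration.integral_cong) auto
      also have "\<dots> = prob Zs * (\<integral>x. indicator A x * cF x \<partial>M)" by (rule integral_mult_right_zero)
      finally show ?thesis unfolding set_lebesgue_integral_def by simp
    qed
    finally show "(\<integral>x\<in>A. (indicator (Zs \<inter> F) x :: real) \<partial>M) = (\<integral>x\<in>A. prob Zs * cF x \<partial>M)" .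
  next
    show "integrable M (indicator (Zs \<inter> F) :: 'a \<Rightarrow> real)" by (rule intI) simp
    show "integrable M (\<lambda>x. prob Zs * cF x)"
      unfolding cF_def by (intro integrable_mult_right S.real_cond_exp_int(1) intI F)
    show "(\<lambda>x. prob Zs * cF x) \<in> borel_measurable G" using cFG by simp
  qed
  have int1: "integrable M (\<lambda>\<omega>. \<psi> (X \<omega>) * indicator E \<omega>)" if "E \<in> sets M" for E
  proof (rule integrable_const_bound[where B=1])
    show "AE x in M. norm (\<psi> (X x) * indicator E x) \<le> (1::real)"
      using bnd by eventually_elim (auto split: split_indicator)
    show "(\<lambda>\<omega>. \<psi> (X \<omega>) * indicator E \<omega>) \<in> borel_measurable M" using that by measurable
  qed
  have "(\<integral>\<omega>. indicator Zs \<omega> * indicator F \<omega> * \<psi> (X \<omega>) \<partial>M) = (\<integral>\<omega>. \<psi> (X \<omega>) * indicator (Zs \<inter> F) \<omega> \<partial>M)"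
    by (rule Bochner_Integration.integral_cong) (auto split: split_indicator)
  also have "\<dots> = (\<integral>\<omega>. \<psi> (X \<omega>) * real_cond_exp M G (indicator (Zs \<inter> F)) \<omega> \<partial>M)"
    by (rule S.real_cond_exp_intg(2)[symmetric]) (use int1[OF ZF] psiG in auto)
  also have "\<dots> = (\<integral>\<omega>. prob Zs * (\<psi> (X \<omega>) * cF \<omega>) \<partial>M)"
  proof (rule integral_cong_AE)
    show "AE x in M. \<psi> (X x) * real_cond_exp M G (indicator (Zs \<inter> F)) x = prob Zs * (\<psi> (X x) * cF x)"
      using ce by eventually_elim simp
  qed simp_all
  also have "\<dots> = prob Zs * (\<integral>\<omega>. \<psi> (X \<omega>) * cF \<omega> \<partial>M)" by simp
  also have "(\<integral>\<omega>. \<psi> (X \<omega>) * cF \<omega> \<partial>M) = (\<integral>\<omega>. \<psi> (X \<omega>) * indicator F \<omega> \<partial>M)"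
    unfolding cF_def by (rule S.real_cond_exp_intg(2)) (use int1[OF F] psiG in auto)
  also have "\<dots> = (\<integral>\<omega>. indicator F \<omega> * \<psi> (X \<omega>) \<partial>M)" by (simp add: mult.commute)
  finally show ?thesis .
qed



lemma stepB:
  fixes M :: "'a measure" and X :: "'a \<Rightarrow> 'x" and Y :: "'a \<Rightarrow> real" and U :: "'a \<Rightarrow> 'u"
    and e1 e2 :: "'x \<Rightarrow> real"
  assumes P: "prob_space M" and X[measurable]: "X \<in> measurable M MX"
    and Y[measurable]: "Y \<in> borel_measurable M" and U[measurable]: "U \<in> measurable M (count_space UNIV)"
    and neq: "u1 \<noteq> u2"
    and PI: "cond_indep M Y borel U (count_space UNIV) X MX"
    and E1: "is_cond_prob_fun M X MX (U -` {u1}) e1"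
    and E2: "is_cond_prob_fun M X MX (U -` {u2}) e2"
    and den: "\<forall>x\<in>space MX. e1 x + e2 x > 0"
    and a[measurable]: "a \<in> sets borel" and g[measurable]: "g \<in> sets MX"
  shows "(\<integral>\<omega>. indicator (Y -` a \<inter> U -` {u1} \<inter> space M) \<omega> * (indicator g (X \<omega>) :: real) \<partial>M)
       = (\<integral>\<omega>. indicator (Y -` a \<inter> U -` {u1,u2} \<inter> space M) \<omega> *
             (e1 (X \<omega>) / (e1 (X \<omega>) + e2 (X \<omega>)) * indicator g (X \<omega>)) \<partial>M)"
    and "AE \<omega> in M. 0 \<le> e1 (X \<omega>)"
proof -
  interpret prob_space M by fact
  define G where "G = vimage_algebra (space M) X MX"
  interpret S: finite_measure_subalgebra M G
    unfolding G_def by (rule fm_sub) (use P in auto)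
  have intI: "integrable M (indicator A :: 'a \<Rightarrow> real)" if "A \<in> sets M" for A
    using that by (simp add: integrable_real_indicator emeasure_finite less_top[symmetric])
  have XG: "X \<in> measurable G MX"
    unfolding G_def by (rule measurable_vimage_algebra1) (use X in \<open>auto simp: measurable_def\<close>)
  have e1m[measurable]: "e1 \<in> borel_measurable MX" using E1 unfolding is_cond_prob_fun_def by simp
  have e2m[measurable]: "e2 \<in> borel_measurable MX" using E2 unfolding is_cond_prob_fun_def by simp
  have compG: "(\<lambda>\<omega>. h (X \<omega>)) \<in> borel_measurable G" if "h \<in> borel_measurable MX" for h :: "'x \<Rightarrow> real"
    using measurable_comp[OF XG that] by (simp add: comp_def)
  define cp where "cp E = real_cond_exp M G (indicator (E \<inter> space M))" for E
  have sets1[measurable]: "Y -` a \<inter> U -` B \<inter> space M \<in> sets M" for B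
  proof -
    have "Y -` a \<inter> U -` B \<inter> space M = (Y -` a \<inter> space M) \<inter> (U -` B \<inter> space M)" by auto
    moreover have "Y -` a \<inter> space M \<in> sets M" by measurable
    moreover have "U -` B \<inter> space M \<in> sets M" by measurable
    ultimately show ?thesis by simp
  qed
  have sets2[measurable]: "U -` B \<inter> space M \<in> sets M" for B by measurable
  have PIa: "AE \<omega> in M. cp (Y -` a \<inter> U -` B) \<omega> = cp (Y -` a) \<omega> * cp (U -` B) \<omega>" for B
    using PI a unfolding cond_indep_def cond_prob_given_def cp_def G_def by auto
  have ce1: "AE \<omega> in M. e1 (X \<omega>) = cp (U -` {u1}) \<omega>"
    using E1 unfolding is_cond_prob_fun_def cond_prob_given_def cp_def G_def by auto
  have ce2: "AE \<omega> in M. e2 (X \<omega>) = cp (U -` {u2}) \<omega>"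
    using E2 unfolding is_cond_prob_fun_def cond_prob_given_def cp_def G_def by auto
  have ind12: "indicator (U -` {u1,u2} \<inter> space M) = (\<lambda>\<omega>. indicator (U -` {u1} \<inter> space M) \<omega> + (indicator (U -` {u2} \<inter> space M) \<omega> :: real))"
    using neq by (auto simp: fun_eq_iff split: split_indicator)
  have ce12: "AE \<omega> in M. cp (U -` {u1,u2}) \<omega> = cp (U -` {u1}) \<omega> + cp (U -` {u2}) \<omega>"
    unfolding cp_def ind12 by (rule S.real_cond_exp_add) (intro intI sets2)+
  have nn: "AE \<omega> in M. cp E \<omega> \<ge> 0" if "E \<inter> space M \<in> sets M" for E
    unfolding cp_def by (rule S.real_cond_exp_ge_c) (rule intI[OF that], simp)
  have le1: "AE \<omega> in M. cp E \<omega> \<le> 1" if "E \<inter> space M \<in> sets M" for E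
    unfolding cp_def by (rule S.real_cond_exp_le_c) (rule intI[OF that], simp split: split_indicator)
  have e1nn: "AE \<omega> in M. 0 \<le> e1 (X \<omega>)" using ce1 nn[of "U -` {u1}"] by auto
  then show "AE \<omega> in M. 0 \<le> e1 (X \<omega>)" .
  have e2nn: "AE \<omega> in M. 0 \<le> e2 (X \<omega>)" using ce2 nn[of "U -` {u2}"] by auto
  define \<psi> where "\<psi> x = e1 x / (e1 x + e2 x) * indicator g x" for x
  have psim[measurable]: "\<psi> \<in> borel_measurable MX" unfolding \<psi>_def by measurable
  have Xsp: "X \<omega> \<in> space MX" if "\<omega> \<in> space M" for \<omega> using X that by (auto simp: measurable_def)
  have psib: "AE \<omega> in M. \<bar>\<psi> (X \<omega>)\<bar> \<le> 1"
    using AE_space e1nn e2nn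
  proof eventually_elim
    case (elim \<omega>)
    then have "e1 (X \<omega>) + e2 (X \<omega>) > 0" using den Xsp[OF elim(1)] by auto
    with elim show ?case by (auto simp: \<psi>_def split: split_indicator)
  qed
  have cpm[measurable]: "cp E \<in> borel_measurable M" for E unfolding cp_def by (rule borel_measurable_cond_exp2)
  have gX: "(\<lambda>\<omega>. indicator g (X \<omega>) :: real) \<in> borel_measurable G"
    by (rule compG) simp
  have "(\<integral>\<omega>. indicator (Y -` a \<inter> U -` {u1} \<inter> space M) \<omega> * (indicator g (X \<omega>) :: real) \<partial>M)
      = (\<integral>\<omega>. indicator g (X \<omega>) * indicator (Y -` a \<inter> U -` {u1} \<inter> space M) \<omega> \<partial>M)"
    by (simp add: mult.commute)
  also have "\<dots> = (\<integral>\<omega>. indicator g (X \<omega>) * cp (Y -` a \<inter> U -` {u1}) \<omega> \<partial>M)"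
    unfolding cp_def
  proof (rule S.real_cond_exp_intg(2)[symmetric])
    show "integrable M (\<lambda>x. indicator g (X x) * indicator (Y -` a \<inter> U -` {u1} \<inter> space M) x :: real)"
      by (rule integrable_const_bound[where B=1]) (auto split: split_indicator)
  qed (use gX in simp_all)
  also have "\<dots> = (\<integral>\<omega>. indicator g (X \<omega>) * (cp (Y -` a) \<omega> * e1 (X \<omega>)) \<partial>M)"
  proof (rule integral_cong_AE)
    show "AE x in M. indicator g (X x) * cp (Y -` a \<inter> U -` {u1}) x = indicator g (X x) * (cp (Y -` a) x * e1 (X x))"
      using PIa[of "{u1}"] ce1 by eventually_elim simp
  qed simp_all
  also have "\<dots> = (\<integral>\<omega>. \<psi> (X \<omega>) * (cp (Y -` a) \<omega> * (cp (U -` {u1}) \<omega> + cp (U -` {u2}) \<omega>)) \<partial>M)"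
  proof (rule integral_cong_AE)
    show "AE x in M. indicator g (X x) * (cp (Y -` a) x * e1 (X x)) = \<psi> (X x) * (cp (Y -` a) x * (cp (U -` {u1}) x + cp (U -` {u2}) x))"
      using AE_space ce1 ce2
    proof eventually_elim
      case (elim \<omega>)
      then have "e1 (X \<omega>) + e2 (X \<omega>) > 0" using den Xsp[OF elim(1)] by auto
      with elim show ?case by (auto simp: \<psi>_def split: split_indicator)
    qed
  qed simp_all
  also have "\<dots> = (\<integral>\<omega>. \<psi> (X \<omega>) * cp (Y -` a \<inter> U -` {u1,u2}) \<omega> \<partial>M)"
  proof (rule integral_cong_AE)
    show "AE x in M. \<psi> (X x) * (cp (Y -` a) x * (cp (U -` {u1}) x + cp (U -` {u2}) x)) = \<psi> (X x) * cp (Y -` a \<inter> U -` {u1,u2}) x"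
      using PIa[of "{u1,u2}"] ce12 by eventually_elim simp
  qed simp_all
  also have "\<dots> = (\<integral>\<omega>. \<psi> (X \<omega>) * indicator (Y -` a \<inter> U -` {u1,u2} \<inter> space M) \<omega> \<partial>M)"
    unfolding cp_def
  proof (rule S.real_cond_exp_intg(2))
    show "integrable M (\<lambda>x. \<psi> (X x) * indicator (Y -` a \<inter> U -` {u1, u2} \<inter> space M) x)"
    proof (rule integrable_const_bound[where B=1])
      show "AE x in M. norm (\<psi> (X x) * indicator (Y -` a \<inter> U -` {u1, u2} \<inter> space M) x) \<le> (1::real)"
        using psib by eventually_elim (auto split: split_indicator)
    qed simp
    show "(\<lambda>x. \<psi> (X x)) \<in> borel_measurable G" by (rule compG) simp
  qed simp
  also have "\<dots> = (\<integral>\<omega>. indicator (Y -` a \<inter> U -` {u1,u2} \<inter> space M) \<omega> *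
             (e1 (X \<omega>) / (e1 (X \<omega>) + e2 (X \<omega>)) * indicator g (X \<omega>)) \<partial>M)"
    by (simp add: \<psi>_def mult.commute)
  finally show "(\<integral>\<omega>. indicator (Y -` a \<inter> U -` {u1} \<inter> space M) \<omega> * (indicator g (X \<omega>) :: real) \<partial>M)
       = (\<integral>\<omega>. indicator (Y -` a \<inter> U -` {u1,u2} \<inter> space M) \<omega> *
             (e1 (X \<omega>) / (e1 (X \<omega>) + e2 (X \<omega>)) * indicator g (X \<omega>)) \<partial>M)" .
qed



lemma stepBC:
  fixes M :: "'a measure" and X :: "'a \<Rightarrow> 'x" and Y :: "'a \<Rightarrow> real" and U :: "'a \<Rightarrow> 'u"
    and e1 e2 :: "'x \<Rightarrow> real"
  assumes P: "prob_space M" and X[measurable]: "X \<in> measurable M MX"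
    and Y[measurable]: "Y \<in> borel_measurable M" and U[measurable]: "U \<in> measurable M (count_space UNIV)"
    and neq: "u1 \<noteq> u2"
    and PI: "cond_indep M Y borel U (count_space UNIV) X MX"
    and E1: "is_cond_prob_fun M X MX (U -` {u1}) e1"
    and E2: "is_cond_prob_fun M X MX (U -` {u2}) e2"
    and den: "\<forall>x\<in>space MX. e1 x + e2 x > 0"
    and Zs[measurable]: "Zs \<in> sets M"
    and indepZ: "\<And>a B g. a \<in> sets borel \<Longrightarrow> g \<in> sets MX \<Longrightarrow>
       measure M (Zs \<inter> (Y -` a \<inter> U -` B \<inter> space M \<inter> X -` g \<inter> space M))
       = measure M Zs * measure M (Y -` a \<inter> U -` B \<inter> space M \<inter> X -` g \<inter> space M)"
    and a[measurable]: "a \<in> sets borel" and g[measurable]: "g \<in> sets MX"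
  shows "(\<integral>\<omega>. indicator Zs \<omega> * indicator (Y -` a \<inter> U -` {u1} \<inter> space M) \<omega> * (indicator g (X \<omega>) :: real) \<partial>M)
       = (\<integral>\<omega>. indicator Zs \<omega> * indicator (Y -` a \<inter> U -` {u1,u2} \<inter> space M) \<omega> *
             (e1 (X \<omega>) / (e1 (X \<omega>) + e2 (X \<omega>)) * indicator g (X \<omega>)) \<partial>M)"
proof -
  interpret prob_space M by fact
  have e1m[measurable]: "e1 \<in> borel_measurable MX" using E1 unfolding is_cond_prob_fun_def by simp
  have e2m[measurable]: "e2 \<in> borel_measurable MX" using E2 unfolding is_cond_prob_fun_def by simp
  have sets1[measurable]: "Y -` a \<inter> U -` B \<inter> space M \<in> sets M" for B
  proof -
    have "Y -` a \<inter> U -` B \<inter> space M = (Y -` a \<inter> space M) \<inter> (U -` B \<inter> space M)" by auto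
    moreover have "Y -` a \<inter> space M \<in> sets M" by measurable
    moreover have "U -` B \<inter> space M \<in> sets M" by measurable
    ultimately show ?thesis by simp
  qed
  have den': "\<forall>x\<in>space MX. e2 x + e1 x > 0" using den by (simp add: add.commute)

  have nn1: "AE \<omega> in M. 0 \<le> e1 (X \<omega>)" using stepB(2)[OF P X Y U neq PI E1 E2 den a g] .
  have nn2: "AE \<omega> in M. 0 \<le> e2 (X \<omega>)" using stepB(2)[OF P X Y U neq[symmetric] PI E2 E1 den' a g] .
  have Xsp: "X \<omega> \<in> space MX" if "\<omega> \<in> space M" for \<omega> using X that by (auto simp: measurable_def)
  define \<psi> where "\<psi> x = e1 x / (e1 x + e2 x) * indicator g x" for x
  have psim[measurable]: "\<psi> \<in> borel_measurable MX" unfolding \<psi>_def by measurable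
  have psib: "AE \<omega> in M. \<bar>\<psi> (X \<omega>)\<bar> \<le> 1"
    using AE_space nn1 nn2
  proof eventually_elim
    case (elim \<omega>)
    then have "e1 (X \<omega>) + e2 (X \<omega>) > 0" using den Xsp[OF elim(1)] by auto
    with elim show ?case by (auto simp: \<psi>_def split: split_indicator)
  qed
  have gb: "AE \<omega> in M. \<bar>indicator g (X \<omega>) :: real\<bar> \<le> 1" by (auto split: split_indicator)
  have "(\<integral>\<omega>. indicator Zs \<omega> * indicator (Y -` a \<inter> U -` {u1} \<inter> space M) \<omega> * (indicator g (X \<omega>) :: real) \<partial>M)
     = prob Zs * (\<integral>\<omega>. indicator (Y -` a \<inter> U -` {u1} \<inter> space M) \<omega> * (indicator g (X \<omega>) :: real) \<partial>M)"
    by (rule remove_Z[OF P X Zs sets1 _ _ gb]) (use indepZ a in auto)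
  also have "(\<integral>\<omega>. indicator (Y -` a \<inter> U -` {u1} \<inter> space M) \<omega> * (indicator g (X \<omega>) :: real) \<partial>M)
      = (\<integral>\<omega>. indicator (Y -` a \<inter> U -` {u1,u2} \<inter> space M) \<omega> * \<psi> (X \<omega>) \<partial>M)"
    unfolding \<psi>_def by (rule stepB(1)[OF P X Y U neq PI E1 E2 den a g])
  also have "prob Zs * \<dots> = (\<integral>\<omega>. indicator Zs \<omega> * indicator (Y -` a \<inter> U -` {u1,u2} \<inter> space M) \<omega> * \<psi> (X \<omega>) \<partial>M)"
    by (rule remove_Z[OF P X Zs sets1 _ psim psib, symmetric]) (use indepZ a in auto)
  finally show ?thesis unfolding \<psi>_def .
qed



lemma percase:
  fixes M :: "'a measure" and X :: "'a \<Rightarrow> 'x" and Y :: "'a \<Rightarrow> real" and U :: "'a \<Rightarrow> 'u"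
    and e1 e2 :: "'x \<Rightarrow> real"
  assumes P: "prob_space M" and X[measurable]: "X \<in> measurable M MX"
    and Y[measurable]: "Y \<in> borel_measurable M" and U[measurable]: "U \<in> measurable M (count_space UNIV)"
    and neq: "u1 \<noteq> u2"
    and PI: "cond_indep M Y borel U (count_space UNIV) X MX"
    and E1: "is_cond_prob_fun M X MX (U -` {u1}) e1"
    and E2: "is_cond_prob_fun M X MX (U -` {u2}) e2"
    and den: "\<forall>x\<in>space MX. e1 x + e2 x > 0"
    and Zs[measurable]: "Zs \<in> sets M"
    and indepZ: "\<And>a B g. a \<in> sets borel \<Longrightarrow> g \<in> sets MX \<Longrightarrow>
       measure M (Zs \<inter> (Y -` a \<inter> U -` B \<inter> space M \<inter> X -` g \<inter> space M))
       = measure M Zs * measure M (Y -` a \<inter> U -` B \<inter> space M \<inter> X -` g \<inter> space M)"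
    and Edef: "E = Zs \<inter> (U -` {u1,u2} \<inter> space M)" and posE: "measure M E > 0"
  shows "cond_indep (uniform_measure M E) Y borel U (count_space UNIV)
           (\<lambda>\<omega>. e1 (X \<omega>) / (e1 (X \<omega>) + e2 (X \<omega>))) borel"
proof -
  interpret prob_space M by fact
  have e1m[measurable]: "e1 \<in> borel_measurable MX" using E1 unfolding is_cond_prob_fun_def by simp
  have e2m[measurable]: "e2 \<in> borel_measurable MX" using E2 unfolding is_cond_prob_fun_def by simp
  have den': "\<forall>x\<in>space MX. e2 x + e1 x > 0" using den by (simp add: add.commute)
  have Xsp: "X \<omega> \<in> space MX" if "\<omega> \<in> space M" for \<omega> using X that by (auto simp: measurable_def)
  have Em[measurable]: "E \<in> sets M"
  proof -
    have "U -` {u1,u2} \<inter> space M \<in> sets M" by measurable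
    then show ?thesis unfolding Edef by simp
  qed
  define T where "T \<omega> = e1 (X \<omega>) / (e1 (X \<omega>) + e2 (X \<omega>))" for \<omega>
  define r where "r x = e1 x / (e1 x + e2 x)" for x
  have rm[measurable]: "r \<in> borel_measurable MX" unfolding r_def by measurable
  have Tm[measurable]: "T \<in> borel_measurable M" unfolding T_def by measurable
  define N where "N = uniform_measure M E"
  have sN: "sets N = sets M" "space N = space M" unfolding N_def by simp_all
  have emE: "emeasure M E \<noteq> 0" "emeasure M E \<noteq> \<infinity>"
    using posE by (auto simp: emeasure_eq_measure)
  have PN: "prob_space N" unfolding N_def by (rule prob_space_uniform_measure[OF emE])
  have mN: "measurable N K = measurable M K" for K :: "'b measure"
    by (rule measurable_cong_sets) (simp_all add: sN)
  have nn1: "AE \<omega> in M. 0 \<le> e1 (X \<omega>)"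
    using stepB(2)[OF P X Y U neq PI E1 E2 den, of UNIV "space MX"] by simp
  have nn2: "AE \<omega> in M. 0 \<le> e2 (X \<omega>)"
    using stepB(2)[OF P X Y U neq[symmetric] PI E2 E1 den', of UNIV "space MX"] by simp
  have T01: "AE \<omega> in M. 0 \<le> T \<omega> \<and> T \<omega> \<le> 1"
    using AE_space nn1 nn2
  proof eventually_elim
    case (elim \<omega>)
    then have "e1 (X \<omega>) + e2 (X \<omega>) > 0" using den Xsp[OF elim(1)] by auto
    with elim show ?case by (auto simp: T_def)
  qed
  define H where "H b \<omega> = (if u1 \<in> b then (if u2 \<in> b then 1 else T \<omega>) else (if u2 \<in> b then 1 - T \<omega> else 0))"
    for b :: "'u set" and \<omega>
  have TV: "T \<in> measurable (vimage_algebra (space N) T borel) borel"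
    by (rule measurable_vimage_algebra1) simp
  have HmV: "H b \<in> borel_measurable (vimage_algebra (space N) T borel)" for b
  proof (cases "u1 \<in> b"; cases "u2 \<in> b")
    show "H b \<in> borel_measurable (vimage_algebra (space N) T borel)" if "u1 \<notin> b" "u2 \<in> b"
    proof -
      have "H b = (\<lambda>\<omega>. 1 - T \<omega>)" using that by (auto simp: H_def fun_eq_iff)
      then show ?thesis using TV by simp
    qed
  qed (auto simp: H_def[abs_def] TV)
  have HmM[measurable]: "H b \<in> borel_measurable M" for b
    unfolding H_def by (cases "u1 \<in> b"; cases "u2 \<in> b") simp_all
  have Hb: "AE \<omega> in N. \<bar>H b \<omega>\<bar> \<le> 1" for b
    unfolding N_def
  proof (rule AE_uniform_measureI[OF Em])
    show "AE x in M. x \<in> E \<longrightarrow> \<bar>H b x\<bar> \<le> 1"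
      using T01 by eventually_elim (auto simp: H_def)
  qed
  have ident: "(\<integral>\<omega>. indicator (Y -` a \<inter> U -` b \<inter> space N) \<omega> * indicator (T -` c \<inter> space N) \<omega> \<partial>N)
      = (\<integral>\<omega>. indicator (Y -` a \<inter> space N) \<omega> * H b \<omega> * indicator (T -` c \<inter> space N) \<omega> \<partial>N)"
    if a[measurable]: "a \<in> sets borel" and c[measurable]: "c \<in> sets borel" for a b c
  proof -
    define g where "g = r -` c \<inter> space MX"
    have g[measurable]: "g \<in> sets MX" unfolding g_def by measurable
    have sets1[measurable]: "Y -` a \<inter> U -` B \<inter> space M \<in> sets M" for B
    proof -
      have "Y -` a \<inter> U -` B \<inter> space M = (Y -` a \<inter> space M) \<inter> (U -` B \<inter> space M)" by auto
      moreover have "Y -` a \<inter> space M \<in> sets M" by measurable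
      moreover have "U -` B \<inter> space M \<in> sets M" by measurable
      ultimately show ?thesis by simp
    qed
    have indT: "indicator (T -` c \<inter> space M) \<omega> = (indicator g (X \<omega>) :: real)" if "\<omega> \<in> space M" for \<omega>
      using that Xsp[OF that] by (auto simp: g_def T_def r_def split: split_indicator)
    have key: "(\<integral>\<omega>. indicator E \<omega> * (indicator (Y -` a \<inter> U -` b \<inter> space M) \<omega> * indicator (T -` c \<inter> space M) \<omega>) \<partial>M)
      = (\<integral>\<omega>. indicator E \<omega> * (indicator (Y -` a \<inter> space M) \<omega> * H b \<omega> * indicator (T -` c \<inter> space M) \<omega>) \<partial>M)"
    proof (cases "u1 \<in> b"; cases "u2 \<in> b")
      assume u1: "u1 \<in> b" and u2: "u2 \<in> b"
      show ?thesis
        by (rule Bochner_Integration.integral_cong)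
           (use u1 u2 in \<open>auto simp: Edef H_def split: split_indicator\<close>)
    next
      assume u1: "u1 \<notin> b" and u2: "u2 \<notin> b"
      show ?thesis
        by (rule Bochner_Integration.integral_cong)
           (use u1 u2 in \<open>auto simp: Edef H_def split: split_indicator\<close>)
    next
      assume u1: "u1 \<in> b" and u2: "u2 \<notin> b"
      have "(\<integral>\<omega>. indicator E \<omega> * (indicator (Y -` a \<inter> U -` b \<inter> space M) \<omega> * indicator (T -` c \<inter> space M) \<omega>) \<partial>M)
          = (\<integral>\<omega>. indicator Zs \<omega> * indicator (Y -` a \<inter> U -` {u1} \<inter> space M) \<omega> * (indicator g (X \<omega>) :: real) \<partial>M)"
        by (rule Bochner_Integration.integral_cong)
           (use u1 u2 in \<open>auto simp: Edef indT split: split_indicator\<close>)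
      also have "\<dots> = (\<integral>\<omega>. indicator Zs \<omega> * indicator (Y -` a \<inter> U -` {u1,u2} \<inter> space M) \<omega> *
             (e1 (X \<omega>) / (e1 (X \<omega>) + e2 (X \<omega>)) * indicator g (X \<omega>)) \<partial>M)"
        by (rule stepBC[OF P X Y U neq PI E1 E2 den Zs indepZ a g])
      also have "\<dots> = (\<integral>\<omega>. indicator E \<omega> * (indicator (Y -` a \<inter> space M) \<omega> * H b \<omega> * indicator (T -` c \<inter> space M) \<omega>) \<partial>M)"
        by (rule Bochner_Integration.integral_cong)
           (use u1 u2 in \<open>auto simp: Edef H_def T_def indT split: split_indicator\<close>)
      finally show ?thesis .
    next
      assume u1: "u1 \<notin> b" and u2: "u2 \<in> b"
      have "(\<integral>\<omega>. indicator E \<omega> * (indicator (Y -` a \<inter> U -` b \<inter> space M) \<omega> * indicator (T -` c \<inter> space M) \<omega>) \<partial>M)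
          = (\<integral>\<omega>. indicator Zs \<omega> * indicator (Y -` a \<inter> U -` {u2} \<inter> space M) \<omega> * (indicator g (X \<omega>) :: real) \<partial>M)"
        by (rule Bochner_Integration.integral_cong)
           (use u1 u2 in \<open>auto simp: Edef indT split: split_indicator\<close>)
      also have "\<dots> = (\<integral>\<omega>. indicator Zs \<omega> * indicator (Y -` a \<inter> U -` {u2,u1} \<inter> space M) \<omega> *
             (e2 (X \<omega>) / (e2 (X \<omega>) + e1 (X \<omega>)) * indicator g (X \<omega>)) \<partial>M)"
        by (rule stepBC[OF P X Y U neq[symmetric] PI E2 E1 den' Zs indepZ a g])
      also have "\<dots> = (\<integral>\<omega>. indicator E \<omega> * (indicator (Y -` a \<inter> space M) \<omega> * H b \<omega> * indicator (T -` c \<inter> space M) \<omega>) \<partial>M)"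
      proof (rule Bochner_Integration.integral_cong)
        fix \<omega> assume w: "\<omega> \<in> space M"
        have d: "e1 (X \<omega>) + e2 (X \<omega>) > 0" using den Xsp[OF w] by auto
        then have "1 - T \<omega> = e2 (X \<omega>) / (e2 (X \<omega>) + e1 (X \<omega>))"
          by (simp add: T_def field_simps)
        then show "indicator Zs \<omega> * indicator (Y -` a \<inter> U -` {u2,u1} \<inter> space M) \<omega> *
             (e2 (X \<omega>) / (e2 (X \<omega>) + e1 (X \<omega>)) * indicator g (X \<omega>)) =
            indicator E \<omega> * (indicator (Y -` a \<inter> space M) \<omega> * H b \<omega> * indicator (T -` c \<inter> space M) \<omega>)"
          using u1 u2 w by (auto simp: Edef H_def indT[OF w] split: split_indicator)
      qed simp
      finally show ?thesis .
    qed
    show ?thesis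
      unfolding sN(2) N_def
      by (simp add: integral_uniform[OF P Em posE] key)
  qed
  have "cond_indep N Y borel U (count_space UNIV) T borel"
  proof (rule ci_from_identity[OF PN])
    show "T \<in> borel_measurable N" "Y \<in> borel_measurable N" "U \<in> measurable N (count_space UNIV)"
      by (simp_all add: mN)
  qed (use HmV Hb ident in auto)
  then show ?thesis unfolding N_def T_def .
qed



theorem lemmaA8:
  fixes M :: "'a measure" and MX :: "'x measure"
    and Z S1 S0 :: "'a \<Rightarrow> bool" and Y1 Y0 :: "'a \<Rightarrow> real" and X :: "'a \<Rightarrow> 'x"
    and e_ss e_ssbar e_sbars e_sbarsbar :: "'x \<Rightarrow> real"
  assumes P: "prob_space M"
    and Z_meas: "Z \<in> measurable M (count_space UNIV)"
    and S1_meas: "S1 \<in> measurable M (count_space UNIV)"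
    and S0_meas: "S0 \<in> measurable M (count_space UNIV)"
    and Y1_meas: "Y1 \<in> borel_measurable M"
    and Y0_meas: "Y0 \<in> borel_measurable M"
    and X_meas: "X \<in> measurable M MX"
    and randomization: "indep_rv M Z (count_space UNIV)
          (\<lambda>\<omega>. (S1 \<omega>, S0 \<omega>, Y1 \<omega>, Y0 \<omega>, X \<omega>))
          (count_space UNIV \<Otimes>\<^sub>M count_space UNIV \<Otimes>\<^sub>M borel \<Otimes>\<^sub>M borel \<Otimes>\<^sub>M MX)"
    and monotonicity: "AE \<omega> in M. S0 \<omega> \<longrightarrow> S1 \<omega>"
    and PI1: "cond_indep M Y1 borel (\<lambda>\<omega>. (S1 \<omega>, S0 \<omega>)) (count_space UNIV) X MX"
    and PI0: "cond_indep M Y0 borel (\<lambda>\<omega>. (S1 \<omega>, S0 \<omega>)) (count_space UNIV) X MX"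
    and e_ss: "is_cond_prob_fun M X MX {\<omega>. (S1 \<omega>, S0 \<omega>) = (True, True)} e_ss"
    and e_ssbar: "is_cond_prob_fun M X MX {\<omega>. (S1 \<omega>, S0 \<omega>) = (True, False)} e_ssbar"
    and e_sbars: "is_cond_prob_fun M X MX {\<omega>. (S1 \<omega>, S0 \<omega>) = (False, True)} e_sbars"
    and e_sbarsbar: "is_cond_prob_fun M X MX {\<omega>. (S1 \<omega>, S0 \<omega>) = (False, False)} e_sbarsbar"
    and den1_pos: "\<forall>x\<in>space MX. e_ssbar x + e_ss x > 0"
    and den0_pos: "\<forall>x\<in>space MX. e_ssbar x + e_sbarsbar x > 0"
    and E1_pos: "measure M {\<omega>\<in>space M. Z \<omega> \<and> (if Z \<omega> then S1 \<omega> else S0 \<omega>)} > 0"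
    and E0_pos: "measure M {\<omega>\<in>space M. \<not> Z \<omega> \<and> \<not> (if Z \<omega> then S1 \<omega> else S0 \<omega>)} > 0"
  shows
    "(let S = (\<lambda>\<omega>. if Z \<omega> then S1 \<omega> else S0 \<omega>);
          U = (\<lambda>\<omega>. (S1 \<omega>, S0 \<omega>));
          M1 = uniform_measure M {\<omega>\<in>space M. Z \<omega> \<and> S \<omega>};
          M0 = uniform_measure M {\<omega>\<in>space M. \<not> Z \<omega> \<and> \<not> S \<omega>};
          e1_ssbar = (\<lambda>x. e_ssbar x / (e_ssbar x + e_ss x));
          e1_ss = (\<lambda>x. e_ss x / (e_ssbar x + e_ss x));
          e0_ssbar = (\<lambda>x. e_ssbar x / (e_ssbar x + e_sbarsbar x));
          e0_sbarsbar = (\<lambda>x. e_sbarsbar x / (e_ssbar x + e_sbarsbar x))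
      in cond_indep M1 Y1 borel U (count_space UNIV) (\<lambda>\<omega>. e1_ssbar (X \<omega>)) borel
       \<and> cond_indep M1 Y1 borel U (count_space UNIV) (\<lambda>\<omega>. e1_ss (X \<omega>)) borel
       \<and> cond_indep M0 Y0 borel U (count_space UNIV) (\<lambda>\<omega>. e0_ssbar (X \<omega>)) borel
       \<and> cond_indep M0 Y0 borel U (count_space UNIV) (\<lambda>\<omega>. e0_sbarsbar (X \<omega>)) borel)"
proof -
  interpret prob_space M by fact
  define U where "U = (\<lambda>\<omega>. (S1 \<omega>, S0 \<omega>))"
  have [measurable]: "Z \<in> measurable M (count_space UNIV)" "S1 \<in> measurable M (count_space UNIV)"
    "S0 \<in> measurable M (count_space UNIV)" "Y1 \<in> borel_measurable M" "Y0 \<in> borel_measurable M"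
    "X \<in> measurable M MX" using assms by simp_all
  have Um: "U \<in> measurable M (count_space UNIV)"
  proof -
    have "U \<in> measurable M (count_space (UNIV :: bool set) \<Otimes>\<^sub>M count_space (UNIV :: bool set))"
      unfolding U_def by measurable
    moreover have "count_space (UNIV :: bool set) \<Otimes>\<^sub>M count_space (UNIV :: bool set) = count_space UNIV"
      by (simp add: pair_measure_countable)
    ultimately show ?thesis by simp
  qed
  have v: "U -` {u} = {\<omega>. (S1 \<omega>, S0 \<omega>) = u}" for u unfolding U_def by auto
  have Ess: "is_cond_prob_fun M X MX (U -` {(True,True)}) e_ss" using e_ss by (simp only: v)
  have Essbar: "is_cond_prob_fun M X MX (U -` {(True,False)}) e_ssbar" using e_ssbar by (simp only: v)
  have Esbarsbar: "is_cond_prob_fun M X MX (U -` {(False,False)}) e_sbarsbar" using e_sbarsbar by (simp only: v)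
  have PI1': "cond_indep M Y1 borel U (count_space UNIV) X MX" using PI1 unfolding U_def .
  have PI0': "cond_indep M Y0 borel U (count_space UNIV) X MX" using PI0 unfolding U_def .
  define V where "V = (\<lambda>\<omega>. (S1 \<omega>, S0 \<omega>, Y1 \<omega>, Y0 \<omega>, X \<omega>))"
  define MV where "MV = ((count_space UNIV \<Otimes>\<^sub>M count_space UNIV \<Otimes>\<^sub>M borel \<Otimes>\<^sub>M borel \<Otimes>\<^sub>M MX)
     :: (bool \<times> bool \<times> real \<times> real \<times> 'x) measure)"
  have ind: "indep_set {Z -` z \<inter> space M | z. z \<in> sets (count_space UNIV)} {V -` b \<inter> space M | b. b \<in> sets MV}"
    using randomization unfolding indep_rv_def V_def[symmetric] MV_def[symmetric] by (elim conjE)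
  have finB: "finite (B :: (bool \<times> bool) set)" for B by (rule finite_subset[OF subset_UNIV]) simp
  have indZ: "measure M (Z -` {z} \<inter> space M \<inter> (V -` b \<inter> space M))
      = measure M (Z -` {z} \<inter> space M) * measure M (V -` b \<inter> space M)" if "b \<in> sets MV" for z b
  proof (rule indep_setD[OF ind])
    show "Z -` {z} \<inter> space M \<in> {Z -` z \<inter> space M | z. z \<in> sets (count_space UNIV)}"
      by (rule CollectI, rule exI[of _ "{z}"]) simp
    show "V -` b \<inter> space M \<in> {V -` b \<inter> space M | b. b \<in> sets MV}"
      by (rule CollectI, rule exI[of _ b]) (simp add: that)
  qed
  have indep1: "measure M (Z -` {z} \<inter> space M \<inter> (Y1 -` a \<inter> U -` B \<inter> space M \<inter> X -` g \<inter> space M))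
       = measure M (Z -` {z} \<inter> space M) * measure M (Y1 -` a \<inter> U -` B \<inter> space M \<inter> X -` g \<inter> space M)"
    if a: "a \<in> sets borel" and g: "g \<in> sets MX" for z a B g
  proof -
    define b where "b = (\<Union>u\<in>B. {fst u} \<times> {snd u} \<times> a \<times> (UNIV :: real set) \<times> g)"
    have bs: "b \<in> sets MV" unfolding b_def MV_def
      by (rule sets.finite_UN[OF finB]) (intro pair_measureI; simp add: a g)
    have beq: "V -` b \<inter> space M = Y1 -` a \<inter> U -` B \<inter> space M \<inter> X -` g \<inter> space M"
    proof (intro set_eqI iffI)
      fix \<omega> assume "\<omega> \<in> V -` b \<inter> space M"
      then show "\<omega> \<in> Y1 -` a \<inter> U -` B \<inter> space M \<inter> X -` g \<inter> space M"
        unfolding b_def V_def U_def by auto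
    next
      fix \<omega> assume h: "\<omega> \<in> Y1 -` a \<inter> U -` B \<inter> space M \<inter> X -` g \<inter> space M"
      then have h1: "(S1 \<omega>, S0 \<omega>) \<in> B" "Y1 \<omega> \<in> a" "X \<omega> \<in> g" "\<omega> \<in> space M"
        unfolding U_def by auto
      have "V \<omega> \<in> {fst (S1 \<omega>, S0 \<omega>)} \<times> {snd (S1 \<omega>, S0 \<omega>)} \<times> a \<times> (UNIV :: real set) \<times> g"
        using h1 unfolding V_def by simp
      then have "V \<omega> \<in> b" unfolding b_def using h1(1) by (rule UN_I[rotated])
      then show "\<omega> \<in> V -` b \<inter> space M" using h1(4) by simp
    qed
    show ?thesis using indZ[OF bs, of z] unfolding beq .
  qed
  have indep0: "measure M (Z -` {z} \<inter> space M \<inter> (Y0 -` a \<inter> U -` B \<inter> space M \<inter> X -` g \<inter> space M))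
       = measure M (Z -` {z} \<inter> space M) * measure M (Y0 -` a \<inter> U -` B \<inter> space M \<inter> X -` g \<inter> space M)"
    if a: "a \<in> sets borel" and g: "g \<in> sets MX" for z a B g
  proof -
    define b where "b = (\<Union>u\<in>B. {fst u} \<times> {snd u} \<times> (UNIV :: real set) \<times> a \<times> g)"
    have bs: "b \<in> sets MV" unfolding b_def MV_def
      by (rule sets.finite_UN[OF finB]) (intro pair_measureI; simp add: a g)
    have beq: "V -` b \<inter> space M = Y0 -` a \<inter> U -` B \<inter> space M \<inter> X -` g \<inter> space M"
    proof (intro set_eqI iffI)
      fix \<omega> assume "\<omega> \<in> V -` b \<inter> space M"
      then show "\<omega> \<in> Y0 -` a \<inter> U -` B \<inter> space M \<inter> X -` g \<inter> space M"
        unfolding b_def V_def U_def by auto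
    next
      fix \<omega> assume h: "\<omega> \<in> Y0 -` a \<inter> U -` B \<inter> space M \<inter> X -` g \<inter> space M"
      then have h1: "(S1 \<omega>, S0 \<omega>) \<in> B" "Y0 \<omega> \<in> a" "X \<omega> \<in> g" "\<omega> \<in> space M"
        unfolding U_def by auto
      have "V \<omega> \<in> {fst (S1 \<omega>, S0 \<omega>)} \<times> {snd (S1 \<omega>, S0 \<omega>)} \<times> (UNIV :: real set) \<times> a \<times> g"
        using h1 unfolding V_def by simp
      then have "V \<omega> \<in> b" unfolding b_def using h1(1) by (rule UN_I[rotated])
      then show "\<omega> \<in> V -` b \<inter> space M" using h1(4) by simp
    qed
    show ?thesis using indZ[OF bs, of z] unfolding beq .
  qed
  have Zs: "Z -` {z} \<inter> space M \<in> sets M" for z by measurable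
  have eq1: "{\<omega>\<in>space M. Z \<omega> \<and> (if Z \<omega> then S1 \<omega> else S0 \<omega>)} = Z -` {True} \<inter> space M \<inter> (U -` {(True,False),(True,True)} \<inter> space M)"
    unfolding U_def by auto
  have eq1': "{\<omega>\<in>space M. Z \<omega> \<and> (if Z \<omega> then S1 \<omega> else S0 \<omega>)} = Z -` {True} \<inter> space M \<inter> (U -` {(True,True),(True,False)} \<inter> space M)"
    unfolding U_def by auto
  have eq0: "{\<omega>\<in>space M. \<not> Z \<omega> \<and> \<not> (if Z \<omega> then S1 \<omega> else S0 \<omega>)} = Z -` {False} \<inter> space M \<inter> (U -` {(True,False),(False,False)} \<inter> space M)"
    unfolding U_def by auto
  have eq0': "{\<omega>\<in>space M. \<not> Z \<omega> \<and> \<not> (if Z \<omega> then S1 \<omega> else S0 \<omega>)} = Z -` {False} \<inter> space M \<inter> (U -` {(False,False),(True,False)} \<inter> space M)"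
    unfolding U_def by auto
  have den1': "\<forall>x\<in>space MX. e_ss x + e_ssbar x > 0" using den1_pos by (simp add: add.commute)
  have den0': "\<forall>x\<in>space MX. e_sbarsbar x + e_ssbar x > 0" using den0_pos by (simp add: add.commute)
  have h1: "cond_indep (uniform_measure M {\<omega>\<in>space M. Z \<omega> \<and> (if Z \<omega> then S1 \<omega> else S0 \<omega>)}) Y1 borel U (count_space UNIV)
      (\<lambda>\<omega>. e_ssbar (X \<omega>) / (e_ssbar (X \<omega>) + e_ss (X \<omega>))) borel"
    by (rule percase[OF P X_meas Y1_meas Um _ PI1' Essbar Ess den1_pos Zs indep1 eq1 E1_pos]) simp
  have h2': "cond_indep (uniform_measure M {\<omega>\<in>space M. Z \<omega> \<and> (if Z \<omega> then S1 \<omega> else S0 \<omega>)}) Y1 borel U (count_space UNIV)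
      (\<lambda>\<omega>. e_ss (X \<omega>) / (e_ss (X \<omega>) + e_ssbar (X \<omega>))) borel"
    by (rule percase[OF P X_meas Y1_meas Um _ PI1' Ess Essbar den1' Zs indep1 eq1' E1_pos]) simp
  have h3: "cond_indep (uniform_measure M {\<omega>\<in>space M. \<not> Z \<omega> \<and> \<not> (if Z \<omega> then S1 \<omega> else S0 \<omega>)}) Y0 borel U (count_space UNIV)
      (\<lambda>\<omega>. e_ssbar (X \<omega>) / (e_ssbar (X \<omega>) + e_sbarsbar (X \<omega>))) borel"
    by (rule percase[OF P X_meas Y0_meas Um _ PI0' Essbar Esbarsbar den0_pos Zs indep0 eq0 E0_pos]) simp
  have h4': "cond_indep (uniform_measure M {\<omega>\<in>space M. \<not> Z \<omega> \<and> \<not> (if Z \<omega> then S1 \<omega> else S0 \<omega>)}) Y0 borel U (count_space UNIV)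
      (\<lambda>\<omega>. e_sbarsbar (X \<omega>) / (e_sbarsbar (X \<omega>) + e_ssbar (X \<omega>))) borel"
    by (rule percase[OF P X_meas Y0_meas Um _ PI0' Esbarsbar Essbar den0' Zs indep0 eq0' E0_pos]) simp
  have c2: "(\<lambda>\<omega>. e_ss (X \<omega>) / (e_ss (X \<omega>) + e_ssbar (X \<omega>))) = (\<lambda>\<omega>. e_ss (X \<omega>) / (e_ssbar (X \<omega>) + e_ss (X \<omega>)))"
    by (simp add: add.commute)
  have c4: "(\<lambda>\<omega>. e_sbarsbar (X \<omega>) / (e_sbarsbar (X \<omega>) + e_ssbar (X \<omega>))) = (\<lambda>\<omega>. e_sbarsbar (X \<omega>) / (e_ssbar (X \<omega>) + e_sbarsbar (X \<omega>)))"
    by (simp add: add.commute)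
  note h2 = h2'[unfolded c2] and h4 = h4'[unfolded c4]
  show ?thesis
    unfolding Let_def U_def[symmetric]
    by (intro conjI h1 h2 h3 h4)
qed


end
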